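(* Let $G=(V,E)$ be a $k$-cozy graph with edge connectivity $\kappa'(G)=2\ell$. Let $D\subset E$ with $|D|=2\ell$ be a set of edges whose removal disconnects $G$ into two components $G_1$ and $G_2$. Then $\kappa'(G_1)\ge\ell$ and $\kappa'(G_2)\ge\ell$.
   Context: An undirected graph $G$ is $k$-cozy if it is connected, $k$-regular, and equipped with a $1$-factorization, i.e., an assignment of colors from $\{1,\dots,k\}$ to its edges such that the $k$ edges incident at each vertex receive distinct colors. The edge connectivity $\kappa'(H)$ of a graph $H$ is the minimum number of edges whose removal disconnects $H$. *)

theory Defs
  imports Main "HOL-Library.Extended_Nat"
begin

definition graph :: "'a set \<Rightarrow> 'a set set \<Rightarrow> bool" where
  "graph V E \<longleftrightarrow> finite V \<and> (\<forall>e\<in>E. \<exists>u v. e = {u, v} \<and> u \<noteq> v \<and> u \<in> V \<and> v \<in> V)"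

definition adj :: "'a set set \<Rightarrow> 'a \<Rightarrow> 'a \<Rightarrow> bool" where
  "adj E u v \<longleftrightarrow> {u, v} \<in> E \<and> u \<noteq> v"

definition connected_graph :: "'a set \<Rightarrow> 'a set set \<Rightarrow> bool" where
  "connected_graph V E \<longleftrightarrow> V \<noteq> {} \<and>
     (\<forall>u\<in>V. \<forall>v\<in>V. (u, v) \<in> {(x, y). adj E x y}\<^sup>*)"

definition degree :: "'a set set \<Rightarrow> 'a \<Rightarrow> nat" where
  "degree E v = card {e \<in> E. v \<in> e}"

definition regular :: "nat \<Rightarrow> 'a set \<Rightarrow> 'a set set \<Rightarrow> bool" where
  "regular k V E \<longleftrightarrow> (\<forall>v\<in>V. degree E v = k)"

definition one_factorization :: "nat \<Rightarrow> 'a set \<Rightarrow> 'a set set \<Rightarrow> ('a set \<Rightarrow> nat) \<Rightarrow> bool" where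
  "one_factorization k V E c \<longleftrightarrow> (\<forall>e\<in>E. c e \<in> {1..k}) \<and>
     (\<forall>v\<in>V. inj_on c {e \<in> E. v \<in> e})"

definition cozy :: "nat \<Rightarrow> 'a set \<Rightarrow> 'a set set \<Rightarrow> bool" where
  "cozy k V E \<longleftrightarrow> graph V E \<and> connected_graph V E \<and> regular k V E \<and>
     (\<exists>c. one_factorization k V E c)"

text \<open>Edge connectivity: minimum number of edges whose removal disconnects the graph
 (infinite if no edge set disconnects it, e.g. a single vertex).\<close>
definition edge_connectivity :: "'a set \<Rightarrow> 'a set set \<Rightarrow> enat" where
  "edge_connectivity V E = (INF F \<in> {F. F \<subseteq> E \<and> \<not> connected_graph V (E - F)}. enat (card F))"

end

theory Submission
  imports Defs
begin

definition cutE :: "'a set set \<Rightarrow> 'a set \<Rightarrow> 'a set set" where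
  "cutE E S = {e\<in>E. e \<inter> S \<noteq> {} \<and> e - S \<noteq> {}}"

lemma cut_disconn:
  assumes "S \<subseteq> V" "S \<noteq> {}" "S \<noteq> V"
  shows "\<not> connected_graph V (E - cutE E S)"
proof
  assume c: "connected_graph V (E - cutE E S)"
  obtain u where u: "u \<in> S" using assms by blast
  obtain v where v: "v \<in> V" "v \<notin> S" using assms by blast
  have "(u,v) \<in> {(x,y). adj (E - cutE E S) x y}\<^sup>*"
    using c u v assms unfolding connected_graph_def by blast
  then have "v \<in> S"
  proof (induction rule: rtrancl_induct)
    case base show ?case using u .
  next
    case (step y z) then show ?case by (auto simp: adj_def cutE_def)
  qed
  with v show False by blast
qed

lemma ec_le:
  assumes "edge_connectivity V E = enat m" "X \<subseteq> E" "\<not> connected_graph V (E - X)"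
  shows "m \<le> card X"
proof -
  have "edge_connectivity V E \<le> enat (card X)" unfolding edge_connectivity_def
    by (rule INF_lower) (use assms in auto)
  then show ?thesis using assms by simp
qed

lemma half:
  assumes g: "graph V E"
   and ec: "edge_connectivity V E = enat (2*l)"
   and D: "D \<subseteq> E" "card D = 2*l"
   and U: "V1 \<union> V2 = V" and I: "V1 \<inter> V2 = {}"
   and sep: "\<forall>e\<in>E-D. e \<subseteq> V1 \<or> e \<subseteq> V2"
   and c1: "connected_graph V1 {e\<in>E-D. e\<subseteq>V1}" and c2: "connected_graph V2 {e \<in> E-D. e \<subseteq> V2}"
  shows "edge_connectivity V1 {e\<in>E-D. e\<subseteq>V1} \<ge> enat l"
proof -
  define E1 where "E1 = {e\<in>E-D. e\<subseteq>V1}"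
  have "E \<subseteq> Pow V"
  proof
    fix e assume "e \<in> E"
    then obtain a b where "e = {a,b}" "a \<in> V" "b \<in> V" using g unfolding graph_def by blast
    then show "e \<in> Pow V" by simp
  qed
  moreover have "finite V" using g unfolding graph_def by blast
  ultimately have finE: "finite E" by (meson finite_Pow_iff finite_subset)
  have finD: "finite D" using D(1) finE by (rule finite_subset)
  have V1ne: "V1 \<noteq> {}" using c1 unfolding connected_graph_def by blast
  have V2ne: "V2 \<noteq> {}" using c2 unfolding connected_graph_def by blast
  have cutsub: "cutE E V1 \<subseteq> D"
  proof
    fix e assume "e \<in> cutE E V1"
    then have eE: "e \<in> E" and e1: "e \<inter> V1 \<noteq> {}" and e2: "e - V1 \<noteq> {}" unfolding cutE_def by auto
    show "e \<in> D"
    proof (rule ccontr)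
      assume "e \<notin> D"
      then have "e \<subseteq> V1 \<or> e \<subseteq> V2" using sep eE by blast
      then show False
      proof
        assume "e \<subseteq> V1" then show False using e2 by blast
      next
        assume "e \<subseteq> V2" then have "e \<inter> V1 = {}" using I by blast
        then show False using e1 by simp
      qed
    qed
  qed
  have "2*l \<le> card (cutE E V1)"
  proof (rule ec_le[OF ec])
    show "cutE E V1 \<subseteq> E" unfolding cutE_def by blast
    show "\<not> connected_graph V (E - cutE E V1)"
    proof (rule cut_disconn)
      show "V1 \<subseteq> V" using U by blast
      show "V1 \<noteq> {}" by (rule V1ne)
      obtain w where "w \<in> V2" using V2ne by blast
      then have "w \<in> V" "w \<notin> V1" using U I by auto
      then show "V1 \<noteq> V" by blast
    qed
  qed
  then have "cutE E V1 = D" using card_subset_eq[OF finD cutsub] card_mono[OF finD cutsub] D by simp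
  then have Dcut: "D \<subseteq> cutE E V1" by simp
  show ?thesis unfolding edge_connectivity_def E1_def[symmetric]
  proof (rule INF_greatest)
    fix F assume "F \<in> {F. F \<subseteq> E1 \<and> \<not> connected_graph V1 (E1 - F)}"
    then have F: "F \<subseteq> E1" and nc: "\<not> connected_graph V1 (E1 - F)" by auto
    let ?R = "{(x, y). adj (E1 - F) x y}"
    obtain u v where uv: "u\<in>V1" "v\<in>V1" "(u,v) \<notin> ?R\<^sup>*"
      using nc V1ne unfolding connected_graph_def by blast
    define A where "A = {x\<in>V1. (u,x) \<in> ?R\<^sup>*}"
    define B where "B = V1 - A"
    have uA: "u \<in> A" using uv A_def by auto
    have vB: "v \<in> B" using uv A_def B_def by auto
    have AV1: "A \<subseteq> V1" and BV1: "B \<subseteq> V1" using A_def B_def by auto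
    have AB: "A \<inter> B = {}" using B_def by auto
    have step: "y \<in> A" if "x \<in> A" "y \<in> V1" "{x,y} \<in> E1 - F" "x \<noteq> y" for x y
    proof -
      have "(u,x) \<in> ?R\<^sup>*" using that A_def by auto
      moreover have "(x,y) \<in> ?R" using that by (auto simp: adj_def)
      ultimately have "(u,y) \<in> ?R\<^sup>*" by (rule rtrancl_into_rtrancl)
      then show ?thesis using that A_def by auto
    qed
    have split: "e \<subseteq> A \<or> e \<inter> A = {}" if "e \<in> E1 - F" for e
    proof -
      have eE: "e \<in> E" and eV: "e \<subseteq> V1" using that unfolding E1_def by auto
      from eE obtain p q where pq: "e = {p,q}" "p \<noteq> q" using g unfolding graph_def by blast
      have pV: "p \<in> V1" and qV: "q \<in> V1" using eV pq(1) by auto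
      have ef: "{p,q} \<in> E1 - F" and ef2: "{q,p} \<in> E1 - F" using that pq(1) by (auto simp: insert_commute)
      have "p \<in> A \<Longrightarrow> q \<in> A" using pq(2) by (intro step[OF _ qV ef]) auto
      moreover have "q \<in> A \<Longrightarrow> p \<in> A" using pq(2) by (intro step[OF _ pV ef2]) auto
      ultimately show ?thesis using pq by auto
    qed
    define DA where "DA = {e\<in>D. e \<inter> A \<noteq> {}}"
    define DB where "DB = {e\<in>D. e \<inter> B \<noteq> {}}"
    have cA: "cutE E A \<subseteq> F \<union> DA"
    proof
      fix e assume e: "e \<in> cutE E A"
      then have eE: "e \<in> E" and e1: "e \<inter> A \<noteq> {}" and e2: "e - A \<noteq> {}"
        unfolding cutE_def by auto
      show "e \<in> F \<union> DA"
      proof (cases "e \<in> D")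
        case True then show ?thesis using e1 unfolding DA_def by simp
      next
        case False
        then have "e \<subseteq> V1 \<or> e \<subseteq> V2" using sep eE by blast
        then have eV1: "e \<subseteq> V1" using e1 AV1 I by blast
        then have eE1: "e \<in> E1" using False eE unfolding E1_def by simp
        show ?thesis
        proof (cases "e \<in> F")
          case True then show ?thesis by simp
        next
          case False
          then have "e \<subseteq> A \<or> e \<inter> A = {}" using split eE1 by blast
          then show ?thesis using e1 e2 eV1 unfolding B_def by auto
        qed
      qed
    qed
    have cB: "cutE E B \<subseteq> F \<union> DB"
    proof
      fix e assume e: "e \<in> cutE E B"
      then have eE: "e \<in> E" and e1: "e \<inter> B \<noteq> {}" and e2: "e - B \<noteq> {}"
        unfolding cutE_def by auto
      show "e \<in> F \<union> DB"
      proof (cases "e \<in> D")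
        case True then show ?thesis using e1 unfolding DB_def by simp
      next
        case False
        then have "e \<subseteq> V1 \<or> e \<subseteq> V2" using sep eE by blast
        then have eV1: "e \<subseteq> V1" using e1 BV1 I by blast
        then have eE1: "e \<in> E1" using False eE unfolding E1_def by simp
        show ?thesis
        proof (cases "e \<in> F")
          case True then show ?thesis by simp
        next
          case False
          then have "e \<subseteq> A \<or> e \<inter> A = {}" using split eE1 by blast
          then show ?thesis using e1 e2 eV1 unfolding B_def by auto
        qed
      qed
    qed
    have disj: "DA \<inter> DB = {}"
    proof (rule ccontr)
      assume "DA \<inter> DB \<noteq> {}"
      then obtain e x y where e: "e \<in> D" "x \<in> e" "x \<in> A" "y \<in> e" "y \<in> B"
        unfolding DA_def DB_def by blast
      then have "e \<in> cutE E V1" using Dcut by blast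
      then obtain z where z: "z \<in> e" "z \<notin> V1" unfolding cutE_def by blast
      have "e \<in> E" using e D by blast
      then obtain p q where pq: "e = {p,q}" using g unfolding graph_def by blast
      have "x \<noteq> y" using e AB by blast
      moreover have "x \<noteq> z" using e z AV1 by blast
      moreover have "y \<noteq> z" using e z BV1 by blast
      ultimately show False using pq e z by auto
    qed
    have "F \<subseteq> E" using F unfolding E1_def by blast
    then have finF: "finite F" using finE by (rule finite_subset)
    have finDA: "finite DA" and finDB: "finite DB" using finD DA_def DB_def by auto
    have "card DA + card DB = card (DA \<union> DB)" using card_Un_disjoint[OF finDA finDB disj] by simp
    also have "\<dots> \<le> card D" by (rule card_mono[OF finD]) (auto simp: DA_def DB_def)
    finally have s: "card DA + card DB \<le> 2*l" using D by simp
    have VV: "V1 \<subseteq> V" using U by blast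
    have "2*l \<le> card (cutE E A)"
    proof (rule ec_le[OF ec])
      show "cutE E A \<subseteq> E" unfolding cutE_def by blast
      have "A \<subseteq> V" using AV1 VV by blast
      moreover have "A \<noteq> {}" using uA vB by blast
      moreover have "A \<noteq> V" using V2ne U I AV1 by blast
      ultimately show "\<not> connected_graph V (E - cutE E A)" by (rule cut_disconn)
    qed
    also have "\<dots> \<le> card (F \<union> DA)" by (rule card_mono) (use finF finDA cA in auto)
    also have "\<dots> \<le> card F + card DA" by (rule card_Un_le)
    finally have a: "2*l \<le> card F + card DA" .
    have "2*l \<le> card (cutE E B)"
    proof (rule ec_le[OF ec])
      show "cutE E B \<subseteq> E" unfolding cutE_def by blast
      have "B \<subseteq> V" using BV1 VV by blast
      moreover have "B \<noteq> {}" using uA vB by blast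
      moreover have "B \<noteq> V" using V2ne U I BV1 by blast
      ultimately show "\<not> connected_graph V (E - cutE E B)" by (rule cut_disconn)
    qed
    also have "\<dots> \<le> card (F \<union> DB)" by (rule card_mono) (use finF finDB cB in auto)
    also have "\<dots> \<le> card F + card DB" by (rule card_Un_le)
    finally have b: "2*l \<le> card F + card DB" .
    from a b s have "l \<le> card F" by linarith
    then show "enat l \<le> enat (card F)" by simp
  qed
qed

theorem mainTheorem12:
  fixes V :: "'a set" and E D :: "'a set set" and k l :: nat and V1 V2 :: "'a set"
  assumes "cozy k V E"
    and "edge_connectivity V E = enat (2 * l)"
    and "D \<subseteq> E" and "card D = 2 * l"
    and "V1 \<union> V2 = V" and "V1 \<inter> V2 = {}"
    and "\<forall>e \<in> E - D. e \<subseteq> V1 \<or> e \<subseteq> V2"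
    and "connected_graph V1 {e \<in> E - D. e \<subseteq> V1}"
    and "connected_graph V2 {e \<in> E - D. e \<subseteq> V2}"
  shows "edge_connectivity V1 {e \<in> E - D. e \<subseteq> V1} \<ge> enat l
       \<and> edge_connectivity V2 {e \<in> E - D. e \<subseteq> V2} \<ge> enat l"
proof
  have g: "graph V E" using assms(1) unfolding cozy_def by blast
  show "edge_connectivity V1 {e \<in> E - D. e \<subseteq> V1} \<ge> enat l"
    by (rule half[OF g assms(2-9)])
  show "edge_connectivity V2 {e \<in> E - D. e \<subseteq> V2} \<ge> enat l"
    by (rule half[OF g assms(2-4), of V2 V1]) (use assms(5-9) in auto)
qed

end
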